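(* Let $d\geq 2$ and let $\mathsf{M}_1,\mathsf{M}_2$ be two $d$-outcome POVMs (outcomes labelled $1,\dots,d$) on $\mathbb{C}^d$. If $\mathsf{M}_1$ and $\mathsf{M}_2$ are compatible, then $$\bar{P}_{\rm qrac}(\mathsf{M}_1,\mathsf{M}_2)=\frac{1}{2d^2}\sum_{x,y=1}^d \big\|\mathsf{M}_1(x)+\mathsf{M}_2(y)\big\| \leq \frac12\left(1+\frac1d\right),$$ i.e. a compatible pair of $d$-outcome measurements is not useful for $(2,d)$-QRAC.
   Context: $\|\cdot\|$ is the operator norm. Two POVMs $\mathsf{M}_1$ (outcomes $x$) and $\mathsf{M}_2$ (outcomes $y$) are compatible if there exists a POVM $\mathsf{G}$ on the product outcome set with $\sum_y \mathsf{G}(x,y)=\mathsf{M}_1(x)$ and $\sum_x\mathsf{G}(x,y)=\mathsf{M}_2(y)$ for all $x,y$; otherwise incompatible. In the $(2,d)$ quantum random access code, Alice receives two dits $(x_1,x_2)$ uniformly at random and sends a state $\mathcal{E}(x_1,x_2)$ on $\mathbb{C}^d$; Bob receives $j\in\{1,2\}$ uniformly and measures $\mathsf{M}_j$, succeeding if the outcome is $x_j$. $\bar P_{\rm qrac}(\mathsf{M}_1,\mathsf{M}_2)$ is the average success probability with the encoding optimized, which equals the displayed norm expression. The quantity $\frac12(1+\frac1d)$ is the optimal average success probability of the classical $(2,d)$ random access code; a pair is called useful for $(2,d)$-QRAC if $\bar P_{\rm qrac}$ strictly exceeds it. *)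

theory Defs
  imports "HOL-Analysis.Analysis"
begin

text \<open>Matrices on C^d are represented as complex^'n^'n with CARD('n) = d.
  The norm on complex^'n is the Euclidean (l2) norm, so onorm of the induced
  linear map is the operator norm.\<close>

definition opnorm :: "complex^'n^'n \<Rightarrow> real" where
  "opnorm A = onorm (\<lambda>v. A *v v)"

definition psd :: "complex^'n^'n \<Rightarrow> bool" where
  "psd A \<longleftrightarrow> (\<forall>v::complex^'n.
      (\<Sum>i\<in>UNIV. cnj (v$i) * (A *v v)$i) \<in> \<real> \<and>
      0 \<le> Re (\<Sum>i\<in>UNIV. cnj (v$i) * (A *v v)$i))"

definition povm :: "'x set \<Rightarrow> ('x \<Rightarrow> complex^'n^'n) \<Rightarrow> bool" where
  "povm X M \<longleftrightarrow> finite X \<and> (\<forall>x\<in>X. psd (M x)) \<and> (\<Sum>x\<in>X. M x) = mat 1"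

definition compatible ::
  "'x set \<Rightarrow> ('x \<Rightarrow> complex^'n^'n) \<Rightarrow> 'y set \<Rightarrow> ('y \<Rightarrow> complex^'n^'n) \<Rightarrow> bool" where
  "compatible X M1 Y M2 \<longleftrightarrow>
     (\<exists>G :: 'x \<times> 'y \<Rightarrow> complex^'n^'n. povm (X \<times> Y) G \<and>
        (\<forall>x\<in>X. (\<Sum>y\<in>Y. G (x, y)) = M1 x) \<and>
        (\<forall>y\<in>Y. (\<Sum>x\<in>X. G (x, y)) = M2 y))"

definition density :: "complex^'n^'n \<Rightarrow> bool" where
  "density \<rho> \<longleftrightarrow> psd \<rho> \<and> trace \<rho> = 1"

definition qrac_prob ::
  "(nat \<Rightarrow> nat \<Rightarrow> complex^'n^'n) \<Rightarrow> (nat \<Rightarrow> complex^'n^'n) \<Rightarrow> (nat \<Rightarrow> complex^'n^'n) \<Rightarrow> real" where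
  "qrac_prob E M1 M2 =
     (let d = CARD('n) in
      (1 / (2 * real d ^ 2)) *
      (\<Sum>x1\<in>{1..d}. \<Sum>x2\<in>{1..d}.
          Re (trace (E x1 x2 ** M1 x1)) + Re (trace (E x1 x2 ** M2 x2))))"

definition Pqrac :: "(nat \<Rightarrow> complex^'n^'n) \<Rightarrow> (nat \<Rightarrow> complex^'n^'n) \<Rightarrow> real" where
  "Pqrac M1 M2 =
     (SUP E \<in> {E :: nat \<Rightarrow> nat \<Rightarrow> complex^'n^'n.
                \<forall>x1\<in>{1..CARD('n)}. \<forall>x2\<in>{1..CARD('n)}. density (E x1 x2)}.
        qrac_prob E M1 M2)"

end

theory Submission
  imports Defs
begin

definition ip :: "complex^'n \<Rightarrow> complex^'n \<Rightarrow> complex" where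
  "ip u w = (\<Sum>i\<in>UNIV. cnj (u$i) * w$i)"

lemma ip_add_right: "ip u (w1 + w2) = ip u w1 + ip u w2"
  by (simp add: ip_def distrib_left sum.distrib)
lemma ip_add_left: "ip (u1 + u2) w = ip u1 w + ip u2 w"
  by (simp add: ip_def distrib_right sum.distrib)
lemma ip_diff_right: "ip u (w1 - w2) = ip u w1 - ip u w2"
  by (simp add: ip_def right_diff_distrib sum_subtractf)
lemma ip_scale_right: "ip u (c *s w) = c * ip u w"
  by (simp add: ip_def sum_distrib_left mult_ac)
lemma ip_scale_left: "ip (c *s u) w = cnj c * ip u w"
  by (simp add: ip_def sum_distrib_left mult_ac)
lemma ip_cnj: "cnj (ip u w) = ip w u"
  by (simp add: ip_def mult_ac)
lemma ip_self: "ip u u = of_real (norm u ^ 2)"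
proof -
  have n: "norm u ^ 2 = (\<Sum>i\<in>UNIV. (cmod (u$i))^2)"
    by (simp add: norm_vec_def L2_set_def sum_nonneg)
  have "ip u u = (\<Sum>i\<in>UNIV. complex_of_real ((cmod (u$i))^2))"
    unfolding ip_def by (rule sum.cong) (simp_all only: complex_norm_square mult.commute)
  also have "\<dots> = of_real (norm u ^ 2)" unfolding n of_real_sum ..
  finally show ?thesis .
qed
lemma ip_axis_left: "ip (axis i 1) w = w$i"
proof -
  have "\<And>k. cnj ((axis i 1)$k) * w$k = (if k = i then w$i else 0)" by (simp add: axis_def)
  then show ?thesis unfolding ip_def by simp
qed
lemma mv_axis: "(A *v axis j 1)$i = (A$i$j :: complex)"
proof -
  have "\<And>k. A$i$k * (axis j 1)$k = (if k = j then A$i$j else 0)" by (simp add: axis_def)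
  then show ?thesis unfolding matrix_vector_mult_def by simp
qed
lemma mv_scale: "A *v (c *s w) = c *s (A *v (w::complex^'n))"
  by (simp add: matrix_vector_mult_def vec_eq_iff sum_distrib_left mult_ac)
lemma mv_add: "A *v (u + w) = A *v u + A *v (w::complex^'n)"
  by (simp add: matrix_vector_right_distrib)

lemma ip_cs: "cmod (ip u w) \<le> norm u * norm w"
proof -
  have "cmod (ip u w) \<le> (\<Sum>i\<in>UNIV. cmod (u$i) * cmod (w$i))"
    unfolding ip_def by (rule order_trans[OF norm_sum]) (simp add: norm_mult)
  also have "\<dots> \<le> L2_set (\<lambda>i. cmod (u$i)) UNIV * L2_set (\<lambda>i. cmod (w$i)) UNIV"
    using L2_set_mult_ineq[of "\<lambda>i. cmod (u$i)" "\<lambda>i. cmod (w$i)" UNIV] by simp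
  finally show ?thesis by (simp add: norm_vec_def)
qed

lemma psdD: "psd A \<Longrightarrow> ip v (A *v v) \<in> \<real> \<and> 0 \<le> Re (ip v (A *v v))"
  unfolding psd_def ip_def by blast

lemma psdI: "(\<And>v. ip v (A *v v) \<in> \<real> \<and> 0 \<le> Re (ip v (A *v v))) \<Longrightarrow> psd A"
  unfolding psd_def ip_def by blast

lemma herm:
  assumes "psd A"
  shows "ip w (A *v u) = cnj (ip u (A *v w))"
proof -
  define a where "a = ip u (A *v w)"
  define b where "b = ip w (A *v u)"
  have e1: "ip (u + w) (A *v (u + w)) = ip u (A *v u) + a + b + ip w (A *v w)"
    by (simp add: a_def b_def mv_add ip_add_left ip_add_right)
  have e2: "ip (u + \<i> *s w) (A *v (u + \<i> *s w)) = ip u (A *v u) + \<i> * a - \<i> * b + ip w (A *v w)"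
    by (simp add: a_def b_def mv_add mv_scale ip_add_left ip_add_right ip_scale_left ip_scale_right algebra_simps)
  have r1: "Im (ip (u + w) (A *v (u + w))) = 0" "Im (ip u (A *v u)) = 0" "Im (ip w (A *v w)) = 0"
       "Im (ip (u + \<i> *s w) (A *v (u + \<i> *s w))) = 0"
    using psdD[OF assms] complex_is_Real_iff by blast+
  have "Im a + Im b = 0" using r1 e1 by simp
  moreover have "Re a - Re b = 0" using r1 e2 by simp
  ultimately show ?thesis unfolding b_def[symmetric] a_def[symmetric]
    by (simp add: complex_eq_iff)
qed

lemma quad_disc:
  fixes x b y :: real
  assumes "\<And>r. 0 \<le> x - 2 * r * b + r^2 * b * y" "b \<ge> 0" "y \<ge> 0"
  shows "b \<le> x * y"
proof (cases "y > 0")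
  case True
  have "0 \<le> x - 2 * (1/y) * b + (1/y)^2 * b * y" by (rule assms(1))
  also have "\<dots> = x - b / y" using True by (simp add: field_simps power2_eq_square)
  finally show ?thesis using True by (simp add: field_simps)
next
  case False
  hence y0: "y = 0" using assms by simp
  show ?thesis
  proof (rule ccontr)
    assume "\<not> b \<le> x * y"
    hence bp: "b > 0" using y0 by simp
    have "0 \<le> x - 2 * ((x+1)/(2*b)) * b + ((x+1)/(2*b))^2 * b * y" by (rule assms(1))
    also have "\<dots> = -1" using bp y0 by (simp add: field_simps)
    finally show False by simp
  qed
qed

lemma psd_cs:
  assumes "psd A"
  shows "(cmod (ip u (A *v w)))^2 \<le> Re (ip u (A *v u)) * Re (ip w (A *v w))"
proof -
  define a where "a = ip u (A *v w)"
  have b: "ip w (A *v u) = cnj a" unfolding a_def by (rule herm[OF assms])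
  have "0 \<le> Re (ip u (A *v u)) - 2 * r * (cmod a)^2 + r^2 * (cmod a)^2 * Re (ip w (A *v w))" for r :: real
  proof -
    define t where "t = - (of_real r) * cnj a"
    have e: "ip (u + t *s w) (A *v (u + t *s w)) = ip u (A *v u) + t * a + (cnj t * cnj a + cnj t * t * ip w (A *v w))"
      by (simp only: a_def b mv_add mv_scale ip_add_left ip_add_right ip_scale_left ip_scale_right) (simp add: algebra_simps)
    have n: "cnj a * a = of_real ((cmod a)^2)" using complex_norm_square[of a] by (simp only: mult.commute)
    have ta: "t * a = - of_real (r * (cmod a)^2)"
    proof -
      have "t * a = - (of_real r * (cnj a * a))" by (simp only: t_def mult.assoc mult_minus_left)
      then show ?thesis by (simp only: n of_real_mult)
    qed
    have tb: "cnj t * cnj a = - of_real (r * (cmod a)^2)"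
    proof -
      have "cnj t * cnj a = - (of_real r * (cnj a * a))" by (simp add: t_def mult_ac)
      then show ?thesis by (simp only: n of_real_mult)
    qed
    have tt: "cnj t * t = of_real (r^2 * (cmod a)^2)"
    proof -
      have "cnj t * t = (of_real r * of_real r) * (cnj a * a)" by (simp add: t_def mult_ac)
      then show ?thesis by (simp only: n of_real_mult power2_eq_square)
    qed
    have "0 \<le> Re (ip (u + t *s w) (A *v (u + t *s w)))" using psdD[OF assms] by blast
    also have "\<dots> = Re (ip u (A *v u)) - 2 * r * (cmod a)^2 + r^2 * (cmod a)^2 * Re (ip w (A *v w))"
      unfolding e ta tb tt by (simp add: Re_complex_of_real)
    finally show ?thesis .
  qed
  from quad_disc[OF this] psdD[OF assms] show ?thesis unfolding a_def by simp
qed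


lemma mv_zero_left: "(0::complex^'n^'n) *v v = 0" by simp

lemma mv_sum: "(\<Sum>k\<in>K. A k) *v (v::complex^'n) = (\<Sum>k\<in>K. A k *v v)"
  by (induct K rule: infinite_finite_induct) (simp_all add: matrix_vector_mult_add_rdistrib)

lemma ip_sum_right: "ip u (\<Sum>k\<in>K. w k) = (\<Sum>k\<in>K. ip u (w k))"
  by (induct K rule: infinite_finite_induct) (simp_all add: ip_def distrib_left sum.distrib)

lemma q_sum: "ip v ((\<Sum>k\<in>K. A k) *v v) = (\<Sum>k\<in>K. ip v (A k *v v))"
  by (simp add: mv_sum ip_sum_right)

lemma q_add: "ip v ((A + B) *v v) = ip v (A *v v) + ip v (B *v v)"
  by (simp add: matrix_vector_mult_add_rdistrib ip_add_right)

lemma psd_add: "psd A \<Longrightarrow> psd B \<Longrightarrow> psd (A + B)"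
  apply (rule psdI)
  using psdD[of A] psdD[of B] by (auto simp: q_add)

lemma psd_zero: "psd (0::complex^'n^'n)"
  by (rule psdI) (simp add: ip_def)

lemma psd_sum: "(\<And>k. k \<in> K \<Longrightarrow> psd (A k)) \<Longrightarrow> psd (\<Sum>k\<in>K. A k)"
  by (induct K rule: infinite_finite_induct) (simp_all add: psd_zero psd_add)

definition outer :: "complex^'n \<Rightarrow> complex^'n \<Rightarrow> complex^'n^'n" where
  "outer u w = (\<chi> i j. u$i * cnj (w$j))"

lemma outer_mv: "outer u w *v v = ip w v *s u"
  by (simp add: outer_def matrix_vector_mult_def ip_def vec_eq_iff sum_distrib_left mult_ac)

lemma ip_scaleR_left: "ip ((r::real) *\<^sub>R u) w = of_real r * ip u w"
  unfolding ip_def vector_scaleR_component by (simp add: scaleR_conv_of_real sum_distrib_left mult_ac)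
lemma ip_scaleR_right: "ip u ((r::real) *\<^sub>R w) = of_real r * ip u w"
  unfolding ip_def vector_scaleR_component by (simp add: scaleR_conv_of_real sum_distrib_left mult_ac)

lemma psd_outer: "psd (outer v v)"
proof (rule psdI)
  fix w
  have "ip w (outer v v *v w) = ip v w * cnj (ip v w)"
    by (simp add: outer_mv ip_scale_right ip_cnj)
  also have "\<dots> = of_real ((cmod (ip v w))^2)" by (rule complex_norm_square[symmetric])
  finally show "ip w (outer v v *v w) \<in> \<real> \<and> 0 \<le> Re (ip w (outer v v *v w))" by simp
qed

lemma trace_mult: "trace (X ** B) = (\<Sum>i\<in>UNIV. \<Sum>k\<in>UNIV. X$i$k * (B$k$i :: complex))"
  by (simp add: trace_def matrix_matrix_mult_def)

lemma tr_outer: "trace (outer u w ** B) = ip w (B *v u)"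
proof -
  have "trace (outer u w ** B) = (\<Sum>i\<in>UNIV. \<Sum>k\<in>UNIV. cnj (w$k) * (B$k$i * u$i))"
    unfolding trace_mult by (simp add: outer_def mult_ac)
  also have "\<dots> = (\<Sum>k\<in>UNIV. \<Sum>i\<in>UNIV. cnj (w$k) * (B$k$i * u$i))" by (rule sum.swap)
  also have "\<dots> = ip w (B *v u)"
    by (simp add: ip_def matrix_vector_mult_def sum_distrib_left)
  finally show ?thesis .
qed

lemma trace_outer: "trace (outer v v) = of_real (norm v ^ 2)"
proof -
  have "trace (outer v v) = ip v v" by (simp add: trace_def outer_def ip_def mult.commute)
  then show ?thesis by (simp only: ip_self)
qed

lemma norm_axis_c: "norm (axis i (1::complex) :: complex^'n) = 1"
proof -
  have "complex_of_real (norm (axis i (1::complex) :: complex^'n) ^ 2) = 1"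
    using ip_self[of "axis i 1 :: complex^'n"] ip_axis_left[of i "axis i 1"] by simp
  hence "norm (axis i (1::complex) :: complex^'n) ^ 2 = 1" by (simp only: of_real_eq_1_iff)
  thus ?thesis by (simp add: power2_eq_1_iff)
qed

lemma diag_real:
  assumes "psd P"
  shows "P$a$a = of_real (Re (P$a$a))" "0 \<le> Re (P$a$a)"
proof -
  have "ip (axis a 1) (P *v axis a 1) = P$a$a" by (simp add: ip_axis_left mv_axis)
  then show "P$a$a = of_real (Re (P$a$a))" "0 \<le> Re (P$a$a)"
    using psdD[OF assms, of "axis a 1"] by (auto simp: complex_is_Real_iff complex_eq_iff)
qed

lemma entry_herm:
  assumes "psd P"
  shows "P$a$j = cnj (P$j$a)"
  using herm[OF assms, of "axis a 1" "axis j 1"] by (simp add: ip_axis_left mv_axis)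

lemma entry_cs:
  assumes "psd P"
  shows "(cmod (P$a$j))^2 \<le> Re (P$a$a) * Re (P$j$j)"
  using psd_cs[OF assms, of "axis a 1" "axis j 1"] by (simp add: ip_axis_left mv_axis)


lemma trace_mult_add_left: "trace ((X + Y) ** B) = trace (X ** B) + trace (Y ** (B::complex^'n^'n))"
  by (simp add: trace_mult distrib_right sum.distrib)
lemma trace_mult_diff_left: "trace ((X - Y) ** B) = trace (X ** B) - trace (Y ** (B::complex^'n^'n))"
  by (simp add: trace_mult left_diff_distrib sum_subtractf)
lemma trace_mult_diff_right: "trace (X ** (Y - Z)) = trace (X ** Y) - trace (X ** (Z::complex^'n^'n))"
  by (simp add: trace_mult right_diff_distrib sum_subtractf)

lemma tr_pos_aux:
  fixes B :: "complex^'n^'n"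
  assumes "psd B" and "finite S"
  shows "\<forall>P. psd P \<and> (\<forall>i j. P$i$j \<noteq> 0 \<longrightarrow> i \<in> S) \<longrightarrow> 0 \<le> Re (trace (P ** B))"
  using assms(2)
proof (induct S rule: finite_induct)
  case empty
  show ?case
  proof (intro allI impI)
    fix P :: "complex^'n^'n" assume h: "psd P \<and> (\<forall>i j. P$i$j \<noteq> 0 \<longrightarrow> i \<in> {})"
    then have "\<forall>i k. P$i$k = 0" by blast
    then show "0 \<le> Re (trace (P ** B))" by (simp add: trace_mult)
  qed
next
  case (insert a S)
  show ?case
  proof (intro allI impI)
    fix P :: "complex^'n^'n" assume h: "psd P \<and> (\<forall>i j. P$i$j \<noteq> 0 \<longrightarrow> i \<in> insert a S)"
    hence pP: "psd P" and sup: "\<And>i j. P$i$j \<noteq> 0 \<Longrightarrow> i \<in> insert a S" by auto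
    define p where "p = Re (P$a$a)"
    have paa: "P$a$a = of_real p" using diag_real(1)[OF pP] p_def by simp
    have p0: "0 \<le> p" using diag_real(2)[OF pP] p_def by simp
    show "0 \<le> Re (trace (P ** B))"
    proof (cases "p = 0")
      case True
      have za: "P$a$j = 0" for j
      proof -
        have "(cmod (P$a$j))^2 \<le> 0" using entry_cs[OF pP, of a j] True p_def by simp
        then show ?thesis by simp
      qed
      have "\<forall>i j. P$i$j \<noteq> 0 \<longrightarrow> i \<in> S"
      proof (intro allI impI)
        fix i j assume "P$i$j \<noteq> 0"
        then show "i \<in> S" using sup[of i j] za[of j] by auto
      qed
      then show ?thesis using insert.hyps(3) pP by blast
    next
      case False
      hence pp: "p > 0" using p0 by simp
      define c where "c = P *v axis a 1"
      define c' where "c' = (1 / complex_of_real p) *s c"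
      define P' where "P' = P - outer c' c"
      have cent: "c$i = P$i$a" for i by (simp add: c_def mv_axis)
      have P'ent: "P'$i$j = P$i$j - (1 / of_real p) * P$i$a * cnj (P$j$a)" for i j
        by (simp add: P'_def outer_def c'_def cent)
      have psdP': "psd P'"
      proof (rule psdI)
        fix v
        define z where "z = ip (axis a 1) (P *v v)"
        have vc: "ip v c = cnj z" unfolding c_def z_def by (rule herm[OF pP])
        have cv: "ip c v = z" using vc ip_cnj[of v c] by simp
        have e1: "ip v (P' *v v) = ip v (P *v v) - ip c v * ip v c'"
          by (simp add: P'_def matrix_vector_mult_diff_rdistrib ip_diff_right outer_mv ip_scale_right)
        have e2: "ip c v * ip v c' = (z * cnj z) / of_real p"
          by (simp add: c'_def ip_scale_right cv vc)
        have e3: "(z * cnj z) / of_real p = of_real ((cmod z)^2 / p)"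
          by (simp only: complex_norm_square[symmetric] of_real_divide)
        have cs: "(cmod z)^2 \<le> p * Re (ip v (P *v v))"
          using psd_cs[OF pP, of "axis a 1" v] unfolding z_def p_def by (simp add: ip_axis_left mv_axis)
        have q: "ip v (P *v v) \<in> \<real>" "0 \<le> Re (ip v (P *v v))" using psdD[OF pP, of v] by auto
        have r: "(cmod z)^2 / p \<le> Re (ip v (P *v v))" using cs pp by (simp add: pos_divide_le_eq mult.commute)
        show "ip v (P' *v v) \<in> \<real> \<and> 0 \<le> Re (ip v (P' *v v))"
          unfolding e1 e2 e3 using q r by auto
      qed
      have supP': "\<forall>i j. P'$i$j \<noteq> 0 \<longrightarrow> i \<in> S"
      proof (intro allI impI)
        fix i j assume ne: "P'$i$j \<noteq> 0"
        show "i \<in> S"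
        proof (rule ccontr)
          assume nS: "i \<notin> S"
          show False
          proof (cases "i = a")
            case True
            have "P'$a$j = 0" using P'ent[of a j] paa entry_herm[OF pP, of a j] pp by simp
            then show False using ne True by simp
          next
            case False
            hence "i \<notin> insert a S" using nS by simp
            hence "P$i$j = 0" "P$i$a = 0" using sup by blast+
            then show False using ne P'ent[of i j] by simp
          qed
        qed
      qed
      have t1: "0 \<le> Re (trace (P' ** B))" using insert.hyps(3) psdP' supP' by blast
      have "trace (outer c' c ** B) = of_real (1/p) * ip c (B *v c)"
        by (simp add: tr_outer c'_def mv_scale ip_scale_right)
      hence t2: "0 \<le> Re (trace (outer c' c ** B))"
        using psdD[OF assms(1), of c] pp by simp
      have "P = P' + outer c' c" by (simp add: P'_def)
      hence "trace (P ** B) = trace (P' ** B) + trace (outer c' c ** B)"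
        by (simp add: trace_mult_add_left)
      then show ?thesis using t1 t2 by simp
    qed
  qed
qed

lemma tr_pos: "psd P \<Longrightarrow> psd B \<Longrightarrow> 0 \<le> Re (trace (P ** (B::complex^'n^'n)))"
  using tr_pos_aux[of B UNIV] by auto

lemma bl: "bounded_linear (\<lambda>v. A *v (v::complex^'n))"
  by (rule matrix_vector_mul_bounded_linear)

lemma mv_norm: "norm (A *v v) \<le> opnorm A * norm (v::complex^'n)"
  unfolding opnorm_def using onorm[OF bl[of A], of v] by simp

lemma opnorm_nonneg: "0 \<le> opnorm (A::complex^'n^'n)"
  unfolding opnorm_def by (rule onorm_pos_le[OF bl])

lemma q_le: "Re (ip v (A *v v)) \<le> opnorm A * (norm (v::complex^'n))^2"
proof -
  have "Re (ip v (A *v v)) \<le> cmod (ip v (A *v v))" by (rule complex_Re_le_cmod)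
  also have "\<dots> \<le> norm v * norm (A *v v)" by (rule ip_cs)
  also have "\<dots> \<le> norm v * (opnorm A * norm v)" by (rule mult_left_mono[OF mv_norm norm_ge_zero])
  finally show ?thesis by (simp add: power2_eq_square mult_ac)
qed

lemma mat_mv: "mat k *v v = k *s (v::complex^'n)"
proof -
  have "\<And>i j. (mat k)$i$j * v$j = (if j = i then k * v$i else 0)" by (simp add: mat_def)
  then show ?thesis by (simp add: vec_eq_iff matrix_vector_mult_def)
qed

lemma trace_mult_mat: "trace (X ** mat k) = trace X * (k::complex)"
proof -
  have "\<And>i j. X$i$j * (mat k)$j$i = (if j = i then X$i$i * k else 0)" by (simp add: mat_def)
  then show ?thesis unfolding trace_mult by (simp add: trace_def sum_distrib_right)
qed

lemma upper:
  assumes "psd A" "density \<rho>"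
  shows "Re (trace (\<rho> ** A)) \<le> opnorm A"
proof -
  define c where "c = opnorm A"
  define Bm where "Bm = mat (complex_of_real c) - A"
  have "psd Bm"
  proof (rule psdI)
    fix v
    have e: "ip v (Bm *v v) = of_real (c * (norm v)^2) - ip v (A *v v)"
      by (simp add: Bm_def matrix_vector_mult_diff_rdistrib ip_diff_right mat_mv ip_scale_right ip_self)
    show "ip v (Bm *v v) \<in> \<real> \<and> 0 \<le> Re (ip v (Bm *v v))"
      unfolding e using psdD[OF assms(1), of v] q_le[of v A] c_def by auto
  qed
  have "0 \<le> Re (trace (\<rho> ** Bm))" using tr_pos \<open>psd Bm\<close> assms(2) density_def by blast
  moreover have "trace (\<rho> ** Bm) = of_real c - trace (\<rho> ** A)"
    using assms(2) by (simp add: Bm_def trace_mult_diff_right trace_mult_mat density_def)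
  ultimately show ?thesis using c_def by simp
qed


lemma mv_scaleR: "A *v ((r::real) *\<^sub>R u) = r *\<^sub>R (A *v (u::complex^'n))"
  by (simp add: vec_eq_iff matrix_vector_mult_def vector_scaleR_component scaleR_sum_right mult_scaleR_right)

lemma maxvec:
  assumes "psd A"
  shows "\<exists>v::complex^'n. norm v = 1 \<and> Re (ip v (A *v v)) = opnorm A"
proof -
  define f where "f = (\<lambda>v::complex^'n. Re (ip v (A *v v)))"
  have cont: "continuous_on (sphere 0 1) f"
    unfolding f_def ip_def
    by (intro continuous_intros linear_continuous_on[OF bl])
  have ne: "sphere (0::complex^'n) 1 \<noteq> {}"
    using norm_axis_c[of undefined] by (metis empty_iff mem_sphere_0)
  obtain v0 where v0: "v0 \<in> sphere 0 1" and mx: "\<And>y. y \<in> sphere 0 1 \<Longrightarrow> f y \<le> f v0"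
    using continuous_attains_sup[OF compact_sphere ne cont] by blast
  define m where "m = f v0"
  have m0: "0 \<le> m" unfolding m_def f_def using psdD[OF assms] by blast
  have qm: "Re (ip u (A *v u)) \<le> m * (norm u)^2" for u
  proof (cases "u = 0")
    case True then show ?thesis by (simp add: ip_def)
  next
    case False
    define r where "r = 1 / norm u"
    have rp: "r > 0" using False r_def by simp
    have "norm (r *\<^sub>R u) = 1" using False r_def by simp
    hence "f (r *\<^sub>R u) \<le> m" using mx m_def by simp
    moreover have "f (r *\<^sub>R u) = r^2 * Re (ip u (A *v u))"
      by (simp add: f_def mv_scaleR ip_scaleR_left ip_scaleR_right power2_eq_square)
    ultimately have "r^2 * Re (ip u (A *v u)) \<le> m" by simp
    hence "(norm u)^2 * (r^2 * Re (ip u (A *v u))) \<le> (norm u)^2 * m"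
      by (rule mult_left_mono) simp
    moreover have "(norm u)^2 * r^2 = 1" unfolding r_def using False by (simp add: power_divide)
    hence "(norm u)^2 * (r^2 * Re (ip u (A *v u))) = Re (ip u (A *v u))"
      by (metis mult.assoc mult_1)
    ultimately show ?thesis by (simp add: mult.commute)
  qed
  have bnd: "norm (A *v w) \<le> m * norm w" for w
  proof -
    define y where "y = A *v w"
    have "ip y (A *v w) = of_real ((norm y)^2)" unfolding y_def by (rule ip_self)
    hence "cmod (ip y (A *v w)) = \<bar>(norm y)^2\<bar>" by (simp only: norm_of_real)
    hence c: "cmod (ip y (A *v w)) = (norm y)^2" by simp
    have "((norm y)^2)^2 \<le> Re (ip y (A *v y)) * Re (ip w (A *v w))"
      using psd_cs[OF assms, of y w] c by simp
    also have "\<dots> \<le> (m * (norm y)^2) * (m * (norm w)^2)"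
      by (rule mult_mono[OF qm qm]) (use m0 psdD[OF assms] in auto)
    finally have h: "((norm y)^2)^2 \<le> (m * (norm y)^2) * (m * (norm w)^2)" .
    show ?thesis
    proof (cases "norm y = 0")
      case True then show ?thesis using m0 y_def by simp
    next
      case False
      hence yp: "(norm y)^2 > 0" by simp
      have "(norm y)^2 * (norm y)^2 \<le> (norm y)^2 * (m * norm w)^2"
        using h by (simp add: power2_eq_square mult_ac)
      from this yp have "(norm y)^2 \<le> (m * norm w)^2" by (rule mult_left_le_imp_le)
      then show ?thesis unfolding y_def[symmetric] by (rule power2_le_imp_le) (use m0 in simp)
    qed
  qed
  have "opnorm A \<le> m" unfolding opnorm_def by (rule onorm_le) (use bnd in simp)
  moreover have "m \<le> opnorm A" using q_le[of v0 A] v0 unfolding m_def f_def by simp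
  ultimately show ?thesis using v0 m_def f_def by auto
qed

lemma density_exists:
  assumes "psd A"
  shows "\<exists>\<rho>. density \<rho> \<and> Re (trace (\<rho> ** A)) = opnorm A"
proof -
  obtain v where v: "norm v = 1" "Re (ip v (A *v v)) = opnorm A" using maxvec[OF assms] by blast
  have "trace (outer v v) = 1" using trace_outer[of v] v(1) by simp
  hence "density (outer v v)" unfolding density_def using psd_outer by simp
  moreover have "Re (trace (outer v v ** A)) = opnorm A" using v by (simp add: tr_outer)
  ultimately show ?thesis by blast
qed

lemma q_le_trace:
  assumes "psd G" "norm v = 1"
  shows "Re (ip v (G *v v)) \<le> Re (trace G)"
proof -
  define P where "P = mat 1 - outer v v"
  have "psd P"
  proof (rule psdI)
    fix w
    have e: "ip w (P *v w) = of_real ((norm w)^2 - (cmod (ip v w))^2)"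
    proof -
      have "ip w (P *v w) = of_real ((norm w)^2) - ip v w * cnj (ip v w)"
        by (simp add: P_def matrix_vector_mult_diff_rdistrib ip_diff_right outer_mv ip_scale_right ip_self ip_cnj)
      then show ?thesis by (simp only: complex_norm_square[symmetric] of_real_diff)
    qed
    have "cmod (ip v w) \<le> norm w" using ip_cs[of v w] assms(2) by simp
    hence "(cmod (ip v w))^2 \<le> (norm w)^2" by (simp add: power_mono)
    then show "ip w (P *v w) \<in> \<real> \<and> 0 \<le> Re (ip w (P *v w))" unfolding e by simp
  qed
  have "0 \<le> Re (trace (P ** G))" by (rule tr_pos[OF \<open>psd P\<close> assms(1)])
  moreover have "trace (P ** G) = trace G - ip v (G *v v)"
    by (simp add: P_def trace_mult_diff_left tr_outer)
  ultimately show ?thesis by simp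
qed


lemma trace_sum: "trace (\<Sum>k\<in>K. A k) = (\<Sum>k\<in>K. trace (A k :: complex^'n^'n))"
  by (simp add: trace_def sum_component) (rule sum.swap)

theorem theorem1:
  fixes M1 M2 :: "nat \<Rightarrow> complex^'n^'n"
  assumes "CARD('n) \<ge> 2"
    and "povm {1..CARD('n)} M1"
    and "povm {1..CARD('n)} M2"
    and "compatible {1..CARD('n)} M1 {1..CARD('n)} M2"
  shows "Pqrac M1 M2 =
           (1 / (2 * real CARD('n) ^ 2)) *
           (\<Sum>x\<in>{1..CARD('n)}. \<Sum>y\<in>{1..CARD('n)}. opnorm (M1 x + M2 y))
         \<and> (1 / (2 * real CARD('n) ^ 2)) *
           (\<Sum>x\<in>{1..CARD('n)}. \<Sum>y\<in>{1..CARD('n)}. opnorm (M1 x + M2 y))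
           \<le> (1/2) * (1 + 1 / real CARD('n))"
proof -
  define X where "X = {1..CARD('n)}"
  define T where "T = (1 / (2 * real CARD('n) ^ 2)) * (\<Sum>x\<in>X. \<Sum>y\<in>X. opnorm (M1 x + M2 y))"
  have fX: "finite X" by (simp add: X_def)
  have psd1: "\<And>x. x \<in> X \<Longrightarrow> psd (M1 x)" using assms(2) unfolding povm_def X_def by blast
  have psd2: "\<And>x. x \<in> X \<Longrightarrow> psd (M2 x)" using assms(3) unfolding povm_def X_def by blast
  have psdC: "\<And>x y. x \<in> X \<Longrightarrow> y \<in> X \<Longrightarrow> psd (M1 x + M2 y)" using psd1 psd2 psd_add by blast
  obtain G where G: "povm (X \<times> X) G" and mg1: "\<And>x. x \<in> X \<Longrightarrow> (\<Sum>y\<in>X. G (x, y)) = M1 x"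
    and mg2: "\<And>y. y \<in> X \<Longrightarrow> (\<Sum>x\<in>X. G (x, y)) = M2 y"
    using assms(4) unfolding compatible_def X_def by blast
  have psdG: "\<And>p. p \<in> X \<times> X \<Longrightarrow> psd (G p)" using G unfolding povm_def by blast
  have sumG: "(\<Sum>p\<in>X \<times> X. G p) = mat 1" using G unfolding povm_def by blast
  have pos: "0 \<le> 1 / (2 * real CARD('n) ^ 2)" by simp
  have qp: "qrac_prob E M1 M2 = (1 / (2 * real CARD('n) ^ 2)) *
      (\<Sum>x1\<in>X. \<Sum>x2\<in>X. Re (trace (E x1 x2 ** (M1 x1 + M2 x2))))" for E
    unfolding qrac_prob_def Let_def X_def by (simp add: matrix_add_ldistrib trace_add)
  define D where "D = {E :: nat \<Rightarrow> nat \<Rightarrow> complex^'n^'n. \<forall>x1\<in>{1..CARD('n)}. \<forall>x2\<in>{1..CARD('n)}. density (E x1 x2)}"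
  have ub: "qrac_prob E M1 M2 \<le> T" if "E \<in> D" for E
  proof -
    have "(\<Sum>x1\<in>X. \<Sum>x2\<in>X. Re (trace (E x1 x2 ** (M1 x1 + M2 x2))))
        \<le> (\<Sum>x\<in>X. \<Sum>y\<in>X. opnorm (M1 x + M2 y))"
      by (intro sum_mono upper psdC) (use that in \<open>auto simp: D_def X_def\<close>)
    then show ?thesis unfolding qp T_def by (rule mult_left_mono[OF _ pos])
  qed
  define E0 where "E0 = (\<lambda>x1 x2. SOME \<rho>. density \<rho> \<and> Re (trace (\<rho> ** (M1 x1 + M2 x2))) = opnorm (M1 x1 + M2 x2))"
  have E0: "density (E0 x1 x2) \<and> Re (trace (E0 x1 x2 ** (M1 x1 + M2 x2))) = opnorm (M1 x1 + M2 x2)"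
    if "x1 \<in> X" "x2 \<in> X" for x1 x2
    unfolding E0_def by (rule someI_ex[OF density_exists[OF psdC[OF that]]])
  have E0D: "E0 \<in> D" using E0 unfolding D_def X_def by blast
  have "qrac_prob E0 M1 M2 = T" unfolding qp T_def
    by (intro arg_cong[where f="\<lambda>s. _ * s"] sum.cong refl) (use E0 in blast)
  have P: "Pqrac M1 M2 = T" unfolding Pqrac_def D_def[symmetric]
    by (rule cSup_eq_maximum) (use ub E0D \<open>qrac_prob E0 M1 M2 = T\<close> in auto)
  have ob: "opnorm (M1 x + M2 y) \<le> 1 + Re (trace (G (x, y)))" if xX: "x \<in> X" and yX: "y \<in> X" for x y
  proof -
    obtain v where v: "norm v = 1" "Re (ip v ((M1 x + M2 y) *v v)) = opnorm (M1 x + M2 y)"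
      using maxvec[OF psdC[OF xX yX]] by blast
    define g where "g = (\<lambda>p. Re (ip v (G p *v v)))"
    have g0: "\<And>a b. a \<in> X \<Longrightarrow> b \<in> X \<Longrightarrow> 0 \<le> g (a, b)" unfolding g_def using psdG psdD by blast
    have "M1 x = (\<Sum>b\<in>X. G (x, b))" using mg1[OF xX] by simp
    hence h1: "Re (ip v (M1 x *v v)) = (\<Sum>b\<in>X. g (x, b))" by (simp add: q_sum g_def)
    have "M2 y = (\<Sum>a\<in>X. G (a, y))" using mg2[OF yX] by simp
    hence h2: "Re (ip v (M2 y *v v)) = (\<Sum>a\<in>X. g (a, y))" by (simp add: q_sum g_def)
    have "ip v (mat 1 *v v) = 1" using v(1) by (simp add: ip_self)
    hence "1 = Re (ip v ((\<Sum>p\<in>X \<times> X. G p) *v v))" unfolding sumG by simp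
    also have "\<dots> = (\<Sum>p\<in>X \<times> X. g p)" by (simp add: q_sum g_def)
    also have "\<dots> = (\<Sum>a\<in>X. \<Sum>b\<in>X. g (a, b))" by (simp add: sum.cartesian_product)
    finally have h3: "1 = (\<Sum>a\<in>X. \<Sum>b\<in>X. g (a, b))" .
    have "(\<Sum>a\<in>X. \<Sum>b\<in>X. g (a, b)) = (\<Sum>b\<in>X. g (x, b)) + (\<Sum>a\<in>X - {x}. \<Sum>b\<in>X. g (a, b))"
      using sum.remove[OF fX xX] by blast
    moreover have "(\<Sum>a\<in>X - {x}. g (a, y)) \<le> (\<Sum>a\<in>X - {x}. \<Sum>b\<in>X. g (a, b))"
      by (intro sum_mono member_le_sum) (use yX fX g0 in auto)
    moreover have "(\<Sum>a\<in>X. g (a, y)) = g (x, y) + (\<Sum>a\<in>X - {x}. g (a, y))"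
      using sum.remove[OF fX xX] by blast
    ultimately have "(\<Sum>b\<in>X. g (x, b)) + (\<Sum>a\<in>X. g (a, y)) \<le> 1 + g (x, y)" using h3 by linarith
    moreover have "opnorm (M1 x + M2 y) = (\<Sum>b\<in>X. g (x, b)) + (\<Sum>a\<in>X. g (a, y))"
      using v(2) h1 h2 by (simp add: q_add)
    moreover have "g (x, y) \<le> Re (trace (G (x, y)))" unfolding g_def
      by (rule q_le_trace[OF psdG v(1)]) (use xX yX in simp)
    ultimately show ?thesis by linarith
  qed
  have "(\<Sum>x\<in>X. \<Sum>y\<in>X. opnorm (M1 x + M2 y)) \<le> (\<Sum>x\<in>X. \<Sum>y\<in>X. 1 + Re (trace (G (x, y))))"
    by (intro sum_mono ob)
  also have "\<dots> = real (card X) * real (card X) + (\<Sum>x\<in>X. \<Sum>y\<in>X. Re (trace (G (x, y))))"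
    by (simp add: sum.distrib)
  also have "(\<Sum>x\<in>X. \<Sum>y\<in>X. Re (trace (G (x, y)))) = Re (trace (\<Sum>p\<in>X \<times> X. G p))"
    by (simp add: trace_sum Re_sum sum.cartesian_product)
  also have "\<dots> = real CARD('n)" by (simp add: sumG trace_I)
  also have "card X = CARD('n)" by (simp add: X_def)
  finally have S: "(\<Sum>x\<in>X. \<Sum>y\<in>X. opnorm (M1 x + M2 y)) \<le> real CARD('n) * real CARD('n) + real CARD('n)" .
  have "T \<le> (1 / (2 * real CARD('n) ^ 2)) * (real CARD('n) * real CARD('n) + real CARD('n))"
    unfolding T_def by (rule mult_left_mono[OF S pos])
  also have "\<dots> = (1/2) * (1 + 1 / real CARD('n))"
    using assms(1) by (simp add: field_simps power2_eq_square)
  finally have "T \<le> (1/2) * (1 + 1 / real CARD('n))" .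
  with P show ?thesis unfolding T_def X_def by simp
qed

end
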